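(* Let $s,t\ge1$ and $k=s+t+4\le n$. Let $Q(s,t)$ be the graph on $k$ vertices consisting of a $4$-cycle $v_1v_2v_3v_4v_1$ with $s$ pendant vertices attached to $v_1$ and $t$ pendant vertices attached to $v_2$, and let $Q_1$ be the graph on $k$ vertices consisting of a $4$-cycle $v_1v_2v_3v_4v_1$ with $k-4$ pendant vertices attached to $v_1$. Let $\Gamma=(K_n,Q(s,t)^-)$ and $\Gamma'=(K_n,Q_1^-)$. Then $\lambda_1(\Gamma)<\lambda_1(\Gamma')$.
   Context: For a subgraph $H$ of $K_n$, $(K_n,H^-)$ denotes the signed complete graph on $n$ vertices whose negative edges are exactly the edges of $H$ (all other edges positive); its adjacency matrix has entry $-1$ for negative edges, $+1$ for positive edges and $0$ on the diagonal. $\lambda_1(\Gamma)$ (the index) is the largest eigenvalue of the adjacency matrix. *)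

theory Defs
  imports "Jordan_Normal_Form.Char_Poly"
begin

text \<open>Graphs on the vertex set {0..<n} are given by a set of edges (unordered pairs).
  Vertices 0,1,2,3 play the roles of v1,v2,v3,v4.\<close>

definition C4_edges :: "nat set set" where
  "C4_edges = {{0,1},{1,2},{2,3},{3,0}}"

definition Q_edges :: "nat \<Rightarrow> nat \<Rightarrow> nat set set" where
  "Q_edges s t = C4_edges \<union> {{0,p} | p. 4 \<le> p \<and> p < 4 + s}
                          \<union> {{1,p} | p. 4 + s \<le> p \<and> p < 4 + s + t}"

definition Q1_edges :: "nat \<Rightarrow> nat set set" where
  "Q1_edges k = C4_edges \<union> {{0,p} | p. 4 \<le> p \<and> p < k}"

definition signed_Kn :: "nat \<Rightarrow> nat set set \<Rightarrow> real mat" where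
  "signed_Kn n H = mat n n (\<lambda>(i,j). if i = j then 0 else if {i,j} \<in> H then -1 else 1)"

definition index :: "real mat \<Rightarrow> real" where
  "index A = Max {x. eigenvalue A x}"

end

theory Submission
  imports Defs
begin

definition pQ :: "real \<Rightarrow> real \<Rightarrow> real \<Rightarrow> real \<Rightarrow> real" where
  "pQ x s t r = (16*s*t*r*x^2 - 64*s*t*r - 8*s*t*x^4 + 32*s*t*x^2 - 4*s*r*x^4 + 32*s*r*x^2 + s*x^6 - 12*s*x^4 - 4*t*r*x^4 + 32*t*r*x^2 + t*x^6 - 12*t*x^4 + r*x^6 - 16*r*x^4 - x^7 + 4*x^6)"

definition g1 :: "real \<Rightarrow> real \<Rightarrow> real \<Rightarrow> real" where
  "g1 m r x = x^5 - (m+r+4)*x^4 + (12*m+16*r+4*m*r)*x^2 - 32*m*r"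

lemma pQ_g1: "pQ x s t r = - (x^2 * g1 (s+t) r x + 8*s*t*(x^2-4)*(x^2-2*r))"
  unfolding pQ_def g1_def by (simp add: algebra_simps power2_eq_square power3_eq_cube power4_eq_xxxx power_numeral_reduce)

lemma algQ:
  fixes x s t r a b c d S :: real
  assumes e1: "(x^2-4*s)*a + 2*x*b + 2*x*d + (2*s - x)*S = 0"
  and e2: "2*x*a + (x^2-4*t)*b + 2*x*c + (2*t - x)*S = 0"
  and e3: "2*b + x*c + 2*d - S = 0"
  and e4: "2*a + 2*c + x*d - S = 0"
  and e5: "(x-2*s)*a + (x-2*t)*b + x*c + x*d + (s+t+r-x)*S = 0"
  and nz: "a \<noteq> 0 \<or> b \<noteq> 0 \<or> c \<noteq> 0 \<or> d \<noteq> 0 \<or> S \<noteq> 0"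
  shows "pQ x s t r = 0"
proof -
  have h1: "pQ x s t r * a = (- 4*s*t*x^2 + 16*s*t + s*x^4 - 8*s*x^2 - 4*t*r*x^2 + 16*t*r + t*x^4 - 8*t*x^2 + r*x^4 - 8*r*x^2 - x^5 + 3*x^4) * ((x^2-4*s)*a + 2*x*b + 2*x*d + (2*s - x)*S) + (- 4*s*t*x^2 + 16*s*t - 4*s*x^2 - 4*t*x^2 - 2*r*x^3 + x^4) * (2*x*a + (x^2-4*t)*b + 2*x*c + (2*t - x)*S) + (2*s*x^4 - 16*t*r*x + 4*t*x^3 + 8*r*x^3 - x^5) * (2*b + x*c + 2*d - S) + (- 4*s*x^3 + 8*t*r*x^2 - 2*t*x^4 - 2*r*x^4 + x^5) * (2*a + 2*c + x*d - S) + (8*s*t*x^2 - 32*s*t - 2*s*x^4 + 16*s*x^2 + 8*t*x^2 + x^5 - 4*x^4) * ((x-2*s)*a + (x-2*t)*b + x*c + x*d + (s+t+r-x)*S)"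
    unfolding pQ_def by (simp add: algebra_simps power2_eq_square power3_eq_cube power4_eq_xxxx power_numeral_reduce)
  have h2: "pQ x s t r * b = (- 4*s*t*x^2 + 16*s*t - 4*s*x^2 - 4*t*x^2 - 2*r*x^3 + x^4) * ((x^2-4*s)*a + 2*x*b + 2*x*d + (2*s - x)*S) + (- 4*s*t*x^2 + 16*s*t - 4*s*r*x^2 + 16*s*r + s*x^4 - 8*s*x^2 + t*x^4 - 8*t*x^2 + r*x^4 - 8*r*x^2 - x^5 + 3*x^4) * (2*x*a + (x^2-4*t)*b + 2*x*c + (2*t - x)*S) + (8*s*r*x^2 - 2*s*x^4 - 4*t*x^3 - 2*r*x^4 + x^5) * (2*b + x*c + 2*d - S) + (- 16*s*r*x + 4*s*x^3 + 2*t*x^4 + 8*r*x^3 - x^5) * (2*a + 2*c + x*d - S) + (8*s*t*x^2 - 32*s*t + 8*s*x^2 - 2*t*x^4 + 16*t*x^2 + x^5 - 4*x^4) * ((x-2*s)*a + (x-2*t)*b + x*c + x*d + (s+t+r-x)*S)"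
    unfolding pQ_def by (simp add: algebra_simps power2_eq_square power3_eq_cube power4_eq_xxxx power_numeral_reduce)
  have h3: "pQ x s t r * c = (2*s*x^3 - 16*t*r + 4*t*x^2 + 8*r*x^2 - x^4) * ((x^2-4*s)*a + 2*x*b + 2*x*d + (2*s - x)*S) + (8*s*r*x - 2*s*x^3 - 4*t*x^2 - 2*r*x^3 + x^4) * (2*x*a + (x^2-4*t)*b + 2*x*c + (2*t - x)*S) + (16*s*t*r*x - 8*s*t*x^3 - 4*s*r*x^3 + s*x^5 - 4*t*r*x^3 + 16*t*r*x + t*x^5 - 8*t*x^3 + r*x^5 - 8*r*x^3 - x^6 + 3*x^5) * (2*b + x*c + 2*d - S) + (- 32*s*t*r + 16*s*t*x^2 + 8*s*r*x^2 - 2*s*x^4 + 8*t*r*x^2 - 2*t*x^4 - 2*r*x^4 + x^5) * (2*a + 2*c + x*d - S) + (- 4*s*x^3 + 8*t*x^2 + x^5 - 4*x^4) * ((x-2*s)*a + (x-2*t)*b + x*c + x*d + (s+t+r-x)*S)"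
    unfolding pQ_def by (simp add: algebra_simps power2_eq_square power3_eq_cube power4_eq_xxxx power_numeral_reduce)
  have h4: "pQ x s t r * d = (- 4*s*x^2 + 8*t*r*x - 2*t*x^3 - 2*r*x^3 + x^4) * ((x^2-4*s)*a + 2*x*b + 2*x*d + (2*s - x)*S) + (- 16*s*r + 4*s*x^2 + 2*t*x^3 + 8*r*x^2 - x^4) * (2*x*a + (x^2-4*t)*b + 2*x*c + (2*t - x)*S) + (- 32*s*t*r + 16*s*t*x^2 + 8*s*r*x^2 - 2*s*x^4 + 8*t*r*x^2 - 2*t*x^4 - 2*r*x^4 + x^5) * (2*b + x*c + 2*d - S) + (16*s*t*r*x - 8*s*t*x^3 - 4*s*r*x^3 + 16*s*r*x + s*x^5 - 8*s*x^3 - 4*t*r*x^3 + t*x^5 + r*x^5 - 8*r*x^3 - x^6 + 3*x^5) * (2*a + 2*c + x*d - S) + (8*s*x^2 - 4*t*x^3 + x^5 - 4*x^4) * ((x-2*s)*a + (x-2*t)*b + x*c + x*d + (s+t+r-x)*S)"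
    unfolding pQ_def by (simp add: algebra_simps power2_eq_square power3_eq_cube power4_eq_xxxx power_numeral_reduce)
  have h5: "pQ x s t r * S = (- 8*s*t*x^2 + 32*s*t + 2*s*x^4 - 16*s*x^2 - 8*t*x^2 - x^5 + 4*x^4) * ((x^2-4*s)*a + 2*x*b + 2*x*d + (2*s - x)*S) + (- 8*s*t*x^2 + 32*s*t - 8*s*x^2 + 2*t*x^4 - 16*t*x^2 - x^5 + 4*x^4) * (2*x*a + (x^2-4*t)*b + 2*x*c + (2*t - x)*S) + (4*s*x^4 - 8*t*x^3 - x^6 + 4*x^5) * (2*b + x*c + 2*d - S) + (- 8*s*x^3 + 4*t*x^4 - x^6 + 4*x^5) * (2*a + 2*c + x*d - S) + (16*s*t*x^2 - 64*s*t - 4*s*x^4 + 32*s*x^2 - 4*t*x^4 + 32*t*x^2 + x^6 - 16*x^4) * ((x-2*s)*a + (x-2*t)*b + x*c + x*d + (s+t+r-x)*S)"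
    unfolding pQ_def by (simp add: algebra_simps power2_eq_square power3_eq_cube power4_eq_xxxx power_numeral_reduce)
  have "pQ x s t r * a = 0" "pQ x s t r * b = 0" "pQ x s t r * c = 0" "pQ x s t r * d = 0" "pQ x s t r * S = 0"
    using h1 h2 h3 h4 h5 e1 e2 e3 e4 e5 by simp_all
  then show ?thesis using nz by auto
qed
lemma kerQ1:
  fixes m r x :: real
  assumes g: "g1 m r x = 0"
  shows "\<exists>a b c S. (b \<noteq> 0 \<or> c \<noteq> 0) \<and> (x^2-4*m)*a + 4*x*b + (2*m-x)*S = 0
     \<and> x*b = S - 2*a - 2*c \<and> x*c = S - 4*b \<and> (x-2*m)*a + 2*x*b + x*c + (m+r-x)*S = 0"
proof -
  define \<alpha>1 where "\<alpha>1 = 4*m*x - x^3 + 4*x^2"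
  define \<beta>1 where "\<beta>1 = 8*m + x^3 - 4*x^2"
  define \<alpha>2 where "\<alpha>2 = 2*m*x + 8*r - x^2"
  define \<beta>2 where "\<beta>2 = 4*m + 2*r*x - x^2"
  have det: "\<alpha>1*\<beta>2 - \<beta>1*\<alpha>2 = 2 * g1 m r x"
    unfolding \<alpha>1_def \<beta>1_def \<alpha>2_def \<beta>2_def g1_def
    by (simp add: algebra_simps power2_eq_square power3_eq_cube power4_eq_xxxx power_numeral_reduce)
  then have det0: "\<alpha>1*\<beta>2 = \<beta>1*\<alpha>2" using g by simp
  have sol: "\<exists>a S. (x^2-4*m)*a + 4*x*(2*u) + (2*m-x)*S = 0
     \<and> x*(2*u) = S - 2*a - 2*(2*w) \<and> x*(2*w) = S - 4*(2*u) \<and> (x-2*m)*a + 2*x*(2*u) + x*(2*w) + (m+r-x)*S = 0"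
    if h1: "\<alpha>1*u + \<beta>1*w = 0" and h2: "\<alpha>2*u + \<beta>2*w = 0" for u w
  proof (intro exI conjI)
    have "(x^2-4*m)*((x-2)*w - (x-4)*u) + 4*x*(2*u) + (2*m-x)*(2*x*w + 8*u) = \<alpha>1*u + \<beta>1*w"
      unfolding \<alpha>1_def \<beta>1_def
      by (simp add: algebra_simps power2_eq_square power3_eq_cube power4_eq_xxxx power_numeral_reduce)
    then show "(x^2-4*m)*((x-2)*w - (x-4)*u) + 4*x*(2*u) + (2*m-x)*(2*x*w + 8*u) = 0" using h1 by simp
    show "x*(2*u) = (2*x*w + 8*u) - 2*((x-2)*w - (x-4)*u) - 2*(2*w)"
      by (simp add: algebra_simps)
    show "x*(2*w) = (2*x*w + 8*u) - 4*(2*u)" by simp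
    have "(x-2*m)*((x-2)*w - (x-4)*u) + 2*x*(2*u) + x*(2*w) + (m+r-x)*(2*x*w + 8*u) = \<alpha>2*u + \<beta>2*w"
      unfolding \<alpha>2_def \<beta>2_def
      by (simp add: algebra_simps power2_eq_square power3_eq_cube power4_eq_xxxx power_numeral_reduce)
    then show "(x-2*m)*((x-2)*w - (x-4)*u) + 2*x*(2*u) + x*(2*w) + (m+r-x)*(2*x*w + 8*u) = 0"
      using h2 by simp
  qed
  have fin: "\<exists>u w. (u \<noteq> 0 \<or> w \<noteq> 0) \<and> \<alpha>1*u + \<beta>1*w = 0 \<and> \<alpha>2*u + \<beta>2*w = 0"
  proof -
    consider "\<alpha>1 \<noteq> 0 \<or> \<beta>1 \<noteq> 0" | "\<alpha>1 = 0 \<and> \<beta>1 = 0 \<and> (\<alpha>2 \<noteq> 0 \<or> \<beta>2 \<noteq> 0)"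
      | "\<alpha>1 = 0 \<and> \<beta>1 = 0 \<and> \<alpha>2 = 0 \<and> \<beta>2 = 0" by blast
    then show ?thesis
    proof cases
      case 1
      have "\<alpha>1*\<beta>1 + \<beta>1*(-\<alpha>1) = 0" "\<alpha>2*\<beta>1 + \<beta>2*(-\<alpha>1) = 0" using det0 by (simp_all add: algebra_simps)
      then show ?thesis using 1 by (intro exI[of _ "\<beta>1"] exI[of _ "-\<alpha>1"]) auto
    next
      case 2
      have "\<alpha>1*\<beta>2 + \<beta>1*(-\<alpha>2) = 0" "\<alpha>2*\<beta>2 + \<beta>2*(-\<alpha>2) = 0" using 2 by simp_all
      then show ?thesis using 2 by (intro exI[of _ "\<beta>2"] exI[of _ "-\<alpha>2"]) auto
    next
      case 3
      then show ?thesis by (intro exI[of _ 1] exI[of _ 0]) auto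
    qed
  qed
  then obtain u w where uw: "u \<noteq> 0 \<or> w \<noteq> 0" "\<alpha>1*u + \<beta>1*w = 0" "\<alpha>2*u + \<beta>2*w = 0" by blast
  from sol[OF uw(2,3)] obtain a S where "(x^2-4*m)*a + 4*x*(2*u) + (2*m-x)*S = 0
     \<and> x*(2*u) = S - 2*a - 2*(2*w) \<and> x*(2*w) = S - 4*(2*u) \<and> (x-2*m)*a + 2*x*(2*u) + x*(2*w) + (m+r-x)*S = 0"
    by blast
  moreover have "2*u \<noteq> 0 \<or> 2*w \<noteq> 0" using uw(1) by simp
  ultimately show ?thesis by blast
qed

lemma g1_low:
  fixes m r :: real
  assumes m: "m \<ge> 2" and r: "r \<ge> 0"
  shows "g1 m r (m+r+2) < 0"
proof -
  define a where "a = m - 2"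
  have a: "a \<ge> 0" using m a_def by simp
  have m_eq: "m = a + 2" using a_def by simp
  have eq: "- g1 m r (m+r+2) = (2*a^4 + 4*a^3*r + 20*a^3 + 4*a^2*r^2 + 16*a^2*r + 72*a^2 + 4*a*r^3 + 4*a*r^2 + 16*a*r + 128*a)
      + (2*r^4 + 8*r^3 - 24*r^2 + 128)"
    unfolding m_eq g1_def
    by (simp add: algebra_simps power2_eq_square power3_eq_cube power4_eq_xxxx power_numeral_reduce)
  have p1: "2*a^4 + 4*a^3*r + 20*a^3 + 4*a^2*r^2 + 16*a^2*r + 72*a^2 + 4*a*r^3 + 4*a*r^2 + 16*a*r + 128*a \<ge> 0"
    using a r by (intro add_nonneg_nonneg mult_nonneg_nonneg zero_le_power) auto
  have p2: "2*r^4 + 8*r^3 - 24*r^2 + 128 > 0"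
  proof (cases "r \<ge> 2")
    case True
    have r2: "(2::real)^2 \<le> r^2" using True by (intro power_mono) auto
    have "2*r^2 + 8*r - 24 \<ge> 0" using r2 True by simp
    then have "r^2 * (2*r^2 + 8*r - 24) \<ge> 0" by simp
    then show ?thesis by (simp add: algebra_simps power2_eq_square power3_eq_cube power4_eq_xxxx power_numeral_reduce)
  next
    case False
    have "r^2 \<le> (2::real)^2" using False r by (intro power_mono) auto
    then have "r^2 \<le> 4" by simp
    moreover have "r^4 \<ge> 0" "r^3 \<ge> 0" using r by simp_all
    ultimately show ?thesis by linarith
  qed
  show ?thesis using eq p1 p2 by linarith
qed

lemma g1_high:
  fixes m r :: real
  assumes m: "m \<ge> 1" and r: "r \<ge> 0"
  shows "g1 m r (m+r+4) > 0"
proof -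
  define N where "N = m+r+4"
  have N: "N \<ge> 4" using m r N_def by simp
  have N2: "(4::real)^2 \<le> N^2" using N by (intro power_mono) auto
  have eq: "g1 m r N = (12*m+16*r)*N^2 + 4*m*r*(N^2 - 8)"
    unfolding g1_def N_def
    by (simp add: algebra_simps power2_eq_square power3_eq_cube power4_eq_xxxx power_numeral_reduce)
  have "(12*m+16*r)*N^2 > 0" using m r N2 by (intro mult_pos_pos) auto
  moreover have "4*m*r*(N^2 - 8) \<ge> 0" using m r N2 by (intro mult_nonneg_nonneg) auto
  ultimately show ?thesis using eq N_def by simp
qed
lemma signed_Kn_carrier: "signed_Kn n H \<in> carrier_mat n n"
  unfolding signed_Kn_def by simp

lemma signed_Kn_dims[simp]: "dim_row (signed_Kn n H) = n" "dim_col (signed_Kn n H) = n"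
  unfolding signed_Kn_def by simp_all

lemma sum_if_allT: "(\<And>j. j \<in> A \<Longrightarrow> P j) \<Longrightarrow> (\<Sum>j\<in>A. if P j then f j else (0::real)) = sum f A"
  by (rule sum.cong) auto

lemma sum_if_allF: "(\<And>j. j \<in> A \<Longrightarrow> \<not> P j) \<Longrightarrow> (\<Sum>j\<in>A. if P j then f j else (0::real)) = 0"
  by (rule sum.neutral) auto

lemma mulvec:
  assumes v: "v \<in> carrier_vec n" and i: "i < n" and nl: "{i} \<notin> H"
  shows "(signed_Kn n H *\<^sub>v v) $ i = (\<Sum>j<n. v$j) - v$i - 2*(\<Sum>j<n. if {i,j} \<in> H then v$j else 0)"
proof -
  have dv: "dim_vec v = n" using v by simp
  have "(signed_Kn n H *\<^sub>v v) $ i = (\<Sum>j\<in>{0..<n}. signed_Kn n H $$ (i,j) * v$j)"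
    using i dv by (simp add: scalar_prod_def)
  also have "\<dots> = (\<Sum>j<n. v$j - (if j = i then v$j else 0) - 2*(if {i,j} \<in> H then v$j else 0))"
  proof (rule sum.cong)
    show "{0..<n} = {..<n}" by auto
  next
    fix j assume "j \<in> {..<n}"
    then have j: "j < n" by simp
    show "signed_Kn n H $$ (i,j) * v$j = v$j - (if j = i then v$j else 0) - 2*(if {i,j} \<in> H then v$j else 0)"
      using i j nl unfolding signed_Kn_def by auto
  qed
  also have "\<dots> = (\<Sum>j<n. v$j) - (\<Sum>j<n. if j = i then v$j else 0) - 2*(\<Sum>j<n. if {i,j} \<in> H then v$j else 0)"
    by (simp add: sum_subtractf sum_distrib_left)
  also have "(\<Sum>j<n. if j = i then v$j else 0) = v$i" using i by (simp add: sum.delta')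
  finally show ?thesis .
qed

lemma Qsing: "{i} \<notin> Q_edges s t"
  unfolding Q_edges_def C4_edges_def by (auto simp: doubleton_eq_iff)

lemma Qa0: "{0,j} \<in> Q_edges s t \<longleftrightarrow> j = 1 \<or> j = 3 \<or> (4 \<le> j \<and> j < 4+s)"
  unfolding Q_edges_def C4_edges_def by (auto simp: doubleton_eq_iff)
lemma Qa1: "{1,j} \<in> Q_edges s t \<longleftrightarrow> j = 0 \<or> j = 2 \<or> (4+s \<le> j \<and> j < 4+s+t)"
  unfolding Q_edges_def C4_edges_def by (auto simp: doubleton_eq_iff)
lemma Qa1': "{Suc 0,j} \<in> Q_edges s t \<longleftrightarrow> j = 0 \<or> j = 2 \<or> (4+s \<le> j \<and> j < 4+s+t)"
  using Qa1 by simp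
lemma Qa2: "{2,j} \<in> Q_edges s t \<longleftrightarrow> j = 1 \<or> j = 3"
  unfolding Q_edges_def C4_edges_def by (auto simp: doubleton_eq_iff)
lemma Qa3: "{3,j} \<in> Q_edges s t \<longleftrightarrow> j = 0 \<or> j = 2"
  unfolding Q_edges_def C4_edges_def by (auto simp: doubleton_eq_iff)
lemma QaP: "4 \<le> i \<Longrightarrow> i < 4+s \<Longrightarrow> {i,j} \<in> Q_edges s t \<longleftrightarrow> j = 0"
  unfolding Q_edges_def C4_edges_def by (auto simp: doubleton_eq_iff)
lemma QaR: "4+s \<le> i \<Longrightarrow> i < 4+s+t \<Longrightarrow> {i,j} \<in> Q_edges s t \<longleftrightarrow> j = 1"
  unfolding Q_edges_def C4_edges_def by (auto simp: doubleton_eq_iff)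
lemma QaZ: "4+s+t \<le> i \<Longrightarrow> {i,j} \<notin> Q_edges s t"
  unfolding Q_edges_def C4_edges_def by (auto simp: doubleton_eq_iff)

lemma split_sum:
  fixes f :: "nat \<Rightarrow> real"
  assumes "4+s+t \<le> n"
  shows "(\<Sum>j<n. f j) = f 0 + f 1 + f 2 + f 3 + (\<Sum>j\<in>{4..<4+s}. f j) + (\<Sum>j\<in>{4+s..<4+s+t}. f j) + (\<Sum>j\<in>{4+s+t..<n}. f j)"
proof -
  have "(\<Sum>j<n. f j) = (\<Sum>j\<in>{0..<n}. f j)" by (simp add: atLeast0LessThan)
  also have "\<dots> = (\<Sum>j\<in>{0..<4}. f j) + (\<Sum>j\<in>{4..<n}. f j)"
    using assms by (simp add: sum.atLeastLessThan_concat)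
  also have "(\<Sum>j\<in>{4..<n}. f j) = (\<Sum>j\<in>{4..<4+s}. f j) + (\<Sum>j\<in>{4+s..<n}. f j)"
    using assms by (simp add: sum.atLeastLessThan_concat)
  also have "(\<Sum>j\<in>{4+s..<n}. f j) = (\<Sum>j\<in>{4+s..<4+s+t}. f j) + (\<Sum>j\<in>{4+s+t..<n}. f j)"
    using assms by (simp add: sum.atLeastLessThan_concat)
  also have "(\<Sum>j\<in>{0..<4}. f j) = f 0 + f 1 + f 2 + f 3"
    by (simp add: numeral_eq_Suc atLeast0_lessThan_Suc)
  finally show ?thesis by simp
qed

lemma nbQ:
  fixes f :: "nat \<Rightarrow> real"
  assumes n: "4+s+t \<le> n"
  shows "(\<Sum>j<n. if {0,j} \<in> Q_edges s t then f j else 0) = f 1 + f 3 + (\<Sum>j\<in>{4..<4+s}. f j)"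
    and "(\<Sum>j<n. if {1,j} \<in> Q_edges s t then f j else 0) = f 0 + f 2 + (\<Sum>j\<in>{4+s..<4+s+t}. f j)"
    and "(\<Sum>j<n. if {2,j} \<in> Q_edges s t then f j else 0) = f 1 + f 3"
    and "(\<Sum>j<n. if {3,j} \<in> Q_edges s t then f j else 0) = f 0 + f 2"
    and "4 \<le> i \<Longrightarrow> i < 4+s \<Longrightarrow> (\<Sum>j<n. if {i,j} \<in> Q_edges s t then f j else 0) = f 0"
    and "4+s \<le> i \<Longrightarrow> i < 4+s+t \<Longrightarrow> (\<Sum>j<n. if {i,j} \<in> Q_edges s t then f j else 0) = f 1"
    and "4+s+t \<le> i \<Longrightarrow> (\<Sum>j<n. if {i,j} \<in> Q_edges s t then f j else 0) = 0"
  by (subst split_sum[OF n], simp add: Qsing Qa0 Qa1 Qa1' Qa2 Qa3 QaP QaR QaZ sum_if_allT sum_if_allF)+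
lemma eig_eq:
  assumes v: "v \<in> carrier_vec n" and i: "i < n" and nl: "{i} \<notin> H"
    and ev: "signed_Kn n H *\<^sub>v v = \<mu> \<cdot>\<^sub>v v"
  shows "(\<mu>+1) * v$i = (\<Sum>j<n. v$j) - 2*(\<Sum>j<n. if {i,j} \<in> H then v$j else 0)"
proof -
  have "(signed_Kn n H *\<^sub>v v) $ i = \<mu> * v$i" using ev v i by simp
  with mulvec[OF v i nl] show ?thesis by (simp add: algebra_simps)
qed

lemma sum_const_eq:
  fixes f :: "nat \<Rightarrow> real"
  assumes "\<And>i. i \<in> A \<Longrightarrow> x * f i = y" "finite A"
  shows "x * sum f A = real (card A) * y"
  using assms by (simp add: sum_distrib_left)

lemma eigQ:
  fixes s t r n :: nat and \<mu> :: real
  assumes n: "n = s+t+4+r" and ev: "eigenvalue (signed_Kn n (Q_edges s t)) \<mu>" and mu: "\<mu> \<noteq> -1"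
  shows "pQ (\<mu>+1) s t r = 0"
proof -
  obtain v where v: "v \<in> carrier_vec n" "v \<noteq> 0\<^sub>v n" "signed_Kn n (Q_edges s t) *\<^sub>v v = \<mu> \<cdot>\<^sub>v v"
    using ev unfolding eigenvalue_def eigenvector_def by auto
  define S where "S = (\<Sum>j<n. v$j)"
  define x where "x = \<mu>+1"
  have x0: "x \<noteq> 0" using mu x_def by auto
  have n': "4+s+t \<le> n" using n by simp
  have eq: "\<And>i. i<n \<Longrightarrow> x * v$i = S - 2*(\<Sum>j<n. if {i,j} \<in> Q_edges s t then v$j else 0)"
    unfolding x_def S_def using eig_eq[OF v(1) _ Qsing v(3)] by blast
  define a where "a = v$0"
  define b where "b = v$1"
  define c where "c = v$2"
  define d where "d = v$3"
  define P where "P = (\<Sum>j\<in>{4..<4+s}. v$j)"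
  define R where "R = (\<Sum>j\<in>{4+s..<4+s+t}. v$j)"
  define Z where "Z = (\<Sum>j\<in>{4+s+t..<n}. v$j)"
  have e0: "x*a = S - 2*(b + d + P)" using eq[of 0] nbQ(1)[OF n'] n unfolding a_def b_def d_def P_def by simp
  have e1: "x*b = S - 2*(a + c + R)" using eq[of 1] nbQ(2)[OF n'] n unfolding a_def b_def c_def R_def by simp
  have e2: "x*c = S - 2*(b + d)" using eq[of 2] nbQ(3)[OF n'] n unfolding b_def c_def d_def by simp
  have e3: "x*d = S - 2*(a + c)" using eq[of 3] nbQ(4)[OF n'] n unfolding a_def c_def d_def by simp
  have eP: "\<And>i. i \<in> {4..<4+s} \<Longrightarrow> x*v$i = S - 2*a"
    using eq nbQ(5)[OF n'] n unfolding a_def by auto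
  have eR: "\<And>i. i \<in> {4+s..<4+s+t} \<Longrightarrow> x*v$i = S - 2*b"
    using eq nbQ(6)[OF n'] n unfolding b_def by auto
  have eZ: "\<And>i. i \<in> {4+s+t..<n} \<Longrightarrow> x*v$i = S"
    using eq nbQ(7)[OF n'] n by auto
  have hP: "x*P = real s * (S - 2*a)" unfolding P_def using sum_const_eq[where A="{4..<4+s}" and f="\<lambda>j. v$j" and x=x and y="S-2*a"] eP by simp
  have hR: "x*R = real t * (S - 2*b)" unfolding R_def using sum_const_eq[where A="{4+s..<4+s+t}" and f="\<lambda>j. v$j" and x=x and y="S-2*b"] eR by simp
  have hZ: "x*Z = real r * S" unfolding Z_def using sum_const_eq[where A="{4+s+t..<n}" and f="\<lambda>j. v$j" and x=x and y="S"] eZ n by simp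
  have hS: "S = a+b+c+d+P+R+Z" unfolding S_def a_def b_def c_def d_def P_def R_def Z_def
    using split_sum[OF n'] by simp
  have E1: "(x^2-4*real s)*a + 2*x*b + 2*x*d + (2*real s - x)*S = 0"
  proof -
    have "(x^2-4*real s)*a + 2*x*b + 2*x*d + (2*real s - x)*S = x*(x*a - (S - 2*(b+d+P))) - 2*(x*P - s*(S-2*a))"
      by (simp add: algebra_simps power2_eq_square)
    then show ?thesis using e0 hP by simp
  qed
  have E2: "2*x*a + (x^2-4*real t)*b + 2*x*c + (2*real t - x)*S = 0"
  proof -
    have "2*x*a + (x^2-4*real t)*b + 2*x*c + (2*real t - x)*S = x*(x*b - (S - 2*(a+c+R))) - 2*(x*R - t*(S-2*b))"
      by (simp add: algebra_simps power2_eq_square)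
    then show ?thesis using e1 hR by simp
  qed
  have E3: "2*b + x*c + 2*d - S = 0" using e2 by simp
  have E4: "2*a + 2*c + x*d - S = 0" using e3 by simp
  have E5: "(x-2*real s)*a + (x-2*real t)*b + x*c + x*d + (real s+real t+real r-x)*S = 0"
  proof -
    have "(x-2*real s)*a + (x-2*real t)*b + x*c + x*d + (real s+real t+real r-x)*S
      = x*(a+b+c+d+P+R+Z - S) - (x*P - s*(S-2*a)) - (x*R - t*(S-2*b)) - (x*Z - r*S)"
      by (simp add: algebra_simps)
    then show ?thesis using hS hP hR hZ by simp
  qed
  have nz: "a \<noteq> 0 \<or> b \<noteq> 0 \<or> c \<noteq> 0 \<or> d \<noteq> 0 \<or> S \<noteq> 0"
  proof (rule ccontr)
    assume "\<not> ?thesis"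
    then have z: "a = 0" "b = 0" "c = 0" "d = 0" "S = 0" by auto
    have "v = 0\<^sub>v n"
    proof (rule eq_vecI)
      show "dim_vec v = dim_vec (0\<^sub>v n)" using v by simp
    next
      fix i assume "i < dim_vec (0\<^sub>v n)"
      then have i: "i < n" by simp
      have "v$i = 0"
      proof -
        consider "i = 0" | "i = 1" | "i = 2" | "i = 3" | "i \<in> {4..<4+s}" | "i \<in> {4+s..<4+s+t}" | "i \<in> {4+s+t..<n}"
          using i by fastforce
        then show ?thesis
        proof cases
          case 5 then show ?thesis using eP[OF 5] z x0 by simp
        next
          case 6 then show ?thesis using eR[OF 6] z x0 by simp
        next
          case 7 then show ?thesis using eZ[OF 7] z x0 by simp
        qed (use z a_def b_def c_def d_def in auto)
      qed
      then show "v$i = 0\<^sub>v n $ i" using i by simp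
    qed
    then show False using v(2) by simp
  qed
  from algQ[OF E1 E2 E3 E4 E5 nz] show ?thesis unfolding x_def .
qed

lemma eigQ1:
  fixes m r n :: nat and x :: real
  assumes n: "n = m+4+r" and g: "g1 m r x = 0" and x0: "x \<noteq> 0"
  shows "eigenvalue (signed_Kn n (Q_edges m 0)) (x-1)"
proof -
  obtain a b c S where k: "b \<noteq> 0 \<or> c \<noteq> 0" "(x^2-4*real m)*a + 4*x*b + (2*real m-x)*S = 0"
     "x*b = S - 2*a - 2*c" "x*c = S - 4*b" "(x-2*real m)*a + 2*x*b + x*c + (real m+real r-x)*S = 0"
    using kerQ1[OF g] by blast
  define f where "f = (\<lambda>i. if i=0 then a else if i=1 \<or> i=3 then b else if i=2 then c
      else if i<4+m then (S-2*a)/x else S/x)"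
  define v where "v = vec n f"
  have n': "4+m+0 \<le> n" using n by simp
  have vc: "v \<in> carrier_vec n" unfolding v_def by simp
  have vi: "\<And>i. i < n \<Longrightarrow> v$i = f i" unfolding v_def by simp
  have fP: "\<And>i. i \<in> {4..<4+m} \<Longrightarrow> f i = (S-2*a)/x" unfolding f_def by auto
  have fZ: "\<And>i. i \<in> {4+m+0..<n} \<Longrightarrow> f i = S/x" unfolding f_def by auto
  have sP: "(\<Sum>j\<in>{4..<4+m}. v$j) = m*((S-2*a)/x)"
  proof -
    have "(\<Sum>j\<in>{4..<4+m}. v$j) = (\<Sum>j\<in>{4..<4+m}. (S-2*a)/x)"
      using fP vi n by (intro sum.cong) auto
    then show ?thesis by simp
  qed
  have sZ: "(\<Sum>j\<in>{4+m+0..<n}. v$j) = r*(S/x)"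
  proof -
    have "(\<Sum>j\<in>{4+m+0..<n}. v$j) = (\<Sum>j\<in>{4+m+0..<n}. S/x)"
      using fZ vi by (intro sum.cong) auto
    then show ?thesis using n by simp
  qed
  have sumv: "(\<Sum>j<n. v$j) = S"
  proof -
    have "(\<Sum>j<n. v$j) = a + b + c + b + m*((S-2*a)/x) + r*(S/x)"
      using split_sum[OF n', of "\<lambda>j. v$j"] sP sZ vi n unfolding f_def by simp
    also have "\<dots> = S"
    proof -
      have "x * (a + b + c + b + m*((S-2*a)/x) + r*(S/x)) = x*S"
        using k(5) x0 by (simp add: field_simps)
      then show ?thesis using x0 by simp
    qed
    finally show ?thesis .
  qed
  have nb: "\<And>i. i < n \<Longrightarrow> x * v$i = S - 2*(\<Sum>j<n. if {i,j} \<in> Q_edges m 0 then v$j else 0)"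
  proof -
    fix i assume i: "i < n"
    consider "i = 0" | "i = 1" | "i = 2" | "i = 3" | "i \<in> {4..<4+m}" | "i \<in> {4+m+0..<n}"
      using i by fastforce
    then show "x * v$i = S - 2*(\<Sum>j<n. if {i,j} \<in> Q_edges m 0 then v$j else 0)"
    proof cases
      case 1
      have "x*a = S - 2*(b + b + m*((S-2*a)/x))"
      proof -
        have "x*a - (S - 2*(b+b+m*((S-2*a)/x))) = ((x^2-4*real m)*a + 4*x*b + (2*real m-x)*S)/x"
          using x0 by (simp add: field_simps power2_eq_square)
        then show ?thesis using k(2) by simp
      qed
      then show ?thesis using 1 nbQ(1)[OF n'] sP vi n unfolding f_def by simp
    next
      case 2
      then show ?thesis using nbQ(2)[OF n'] vi n k(3) unfolding f_def by simp
    next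
      case 3
      then show ?thesis using nbQ(3)[OF n'] vi n k(4) unfolding f_def by simp
    next
      case 4
      then show ?thesis using nbQ(4)[OF n'] vi n k(3) unfolding f_def by simp
    next
      case 5
      then show ?thesis using nbQ(5)[OF n'] vi n x0 fP[OF 5] unfolding f_def by simp
    next
      case 6
      then show ?thesis using nbQ(7)[OF n'] vi n x0 fZ[OF 6] by simp
    qed
  qed
  have ev: "signed_Kn n (Q_edges m 0) *\<^sub>v v = (x-1) \<cdot>\<^sub>v v"
  proof (rule eq_vecI)
    fix i assume "i < dim_vec ((x-1) \<cdot>\<^sub>v v)"
    then have i: "i < n" using vc by simp
    have "(signed_Kn n (Q_edges m 0) *\<^sub>v v) $ i = S - v$i - 2*(\<Sum>j<n. if {i,j} \<in> Q_edges m 0 then v$j else 0)"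
      using mulvec[OF vc i Qsing] sumv by simp
    also have "\<dots> = (x-1) * v$i" using nb[OF i] by (simp add: algebra_simps)
    finally show "(signed_Kn n (Q_edges m 0) *\<^sub>v v) $ i = ((x-1) \<cdot>\<^sub>v v) $ i" using i vc by simp
  qed (use vc in simp)
  have nz: "v \<noteq> 0\<^sub>v n"
  proof
    assume "v = 0\<^sub>v n"
    then have "v$1 = 0" "v$2 = 0" using n by auto
    then show False using k(1) vi n unfolding f_def by simp
  qed
  show ?thesis unfolding eigenvalue_def eigenvector_def using vc nz ev by auto
qed

lemma Q1_eq: "k \<ge> 4 \<Longrightarrow> Q1_edges k = Q_edges (k-4) 0"
  unfolding Q1_edges_def Q_edges_def by auto
lemma eig_from_sums:
  fixes A :: "real mat"
  assumes A: "A \<in> carrier_mat n n" and w: "w \<in> carrier_vec n" "w \<noteq> 0\<^sub>v n"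
    and h: "\<And>i. i < n \<Longrightarrow> (\<Sum>j<n. A$$(i,j) * w$j) = \<mu> * w$i"
  shows "eigenvalue A \<mu>"
proof -
  have "A *\<^sub>v w = \<mu> \<cdot>\<^sub>v w"
  proof (rule eq_vecI)
    fix i assume "i < dim_vec (\<mu> \<cdot>\<^sub>v w)"
    then have i: "i < n" using w by simp
    have "(A *\<^sub>v w) $ i = (\<Sum>j\<in>{0..<n}. A$$(i,j) * w$j)"
      using A w i by (simp add: scalar_prod_def)
    also have "\<dots> = (\<Sum>j<n. A$$(i,j) * w$j)" by (simp add: atLeast0LessThan)
    also have "\<dots> = \<mu> * w$i" using h[OF i] .
    finally show "(A *\<^sub>v w) $ i = (\<mu> \<cdot>\<^sub>v w) $ i" using i w by simp
  qed (use A w in simp)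
  then show ?thesis unfolding eigenvalue_def eigenvector_def using A w by auto
qed

lemma sym_eig:
  fixes A :: "real mat"
  assumes A: "A \<in> carrier_mat n n" and n: "0 < n"
    and sym: "\<And>i j. i<n \<Longrightarrow> j<n \<Longrightarrow> A$$(i,j) = A$$(j,i)"
  shows "\<exists>\<mu>. eigenvalue A \<mu>"
proof -
  define Ac where "Ac = map_mat complex_of_real A"
  have Ac: "Ac \<in> carrier_mat n n" using A by (simp add: Ac_def)
  have Aci: "\<And>i j. i<n \<Longrightarrow> j<n \<Longrightarrow> Ac$$(i,j) = complex_of_real (A$$(i,j))"
    using A unfolding Ac_def by auto
  obtain as where cp: "char_poly Ac = (\<Prod>a\<leftarrow>as. [:-a,1:])" and len: "length as = n"
    using char_poly_factorized[OF Ac] by blast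
  obtain a where a: "a \<in> set as" using n len by (cases as) auto
  have "poly (char_poly Ac) a = 0" unfolding cp poly_prod_list
    using a by (simp add: prod_list_zero_iff o_def)
  then have "eigenvalue Ac a" using eigenvalue_root_char_poly[OF Ac] by simp
  then obtain v where v: "v \<in> carrier_vec n" "v \<noteq> 0\<^sub>v n" "Ac *\<^sub>v v = a \<cdot>\<^sub>v v"
    unfolding eigenvalue_def eigenvector_def using Ac by auto
  have Av: "(\<Sum>j<n. complex_of_real (A$$(i,j)) * v$j) = a * v$i" if i: "i < n" for i
  proof -
    have "(Ac *\<^sub>v v) $ i = (\<Sum>j\<in>{0..<n}. Ac$$(i,j) * v$j)"
      using Ac v(1) i by (simp add: scalar_prod_def)
    also have "\<dots> = (\<Sum>j<n. complex_of_real (A$$(i,j)) * v$j)"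
      using Aci i by (auto simp: atLeast0LessThan intro!: sum.cong)
    finally show ?thesis using v i by simp
  qed
  define q where "q = (\<Sum>i<n. \<Sum>j<n. cnj (v$i) * complex_of_real (A$$(i,j)) * v$j)"
  define R where "R = (\<Sum>i<n. (cmod (v$i))^2)"
  have q_eq: "q = a * complex_of_real R"
  proof -
    have "q = (\<Sum>i<n. cnj (v$i) * (\<Sum>j<n. complex_of_real (A$$(i,j)) * v$j))"
      unfolding q_def by (simp add: sum_distrib_left mult.assoc)
    also have "\<dots> = (\<Sum>i<n. a * (cnj (v$i) * v$i))"
      using Av by (intro sum.cong) (auto simp: ac_simps)
    also have "\<dots> = a * complex_of_real R"
    proof -
      have cz: "cnj z * z = complex_of_real ((cmod z)^2)" for z
        by (subst complex_norm_square) (simp add: mult.commute)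
      show ?thesis unfolding R_def of_real_sum sum_distrib_left by (simp only: cz)
    qed
    finally show ?thesis .
  qed
  have cq: "cnj q = q"
  proof -
    have "cnj q = (\<Sum>i<n. \<Sum>j<n. v$i * complex_of_real (A$$(i,j)) * cnj (v$j))"
      unfolding q_def by simp
    also have "\<dots> = (\<Sum>j<n. \<Sum>i<n. v$i * complex_of_real (A$$(i,j)) * cnj (v$j))"
      by (rule sum.swap)
    also have "\<dots> = q" unfolding q_def
      by (intro sum.cong refl) (simp add: sym ac_simps)
    finally show ?thesis .
  qed
  have "\<exists>k<n. v$k \<noteq> 0"
  proof (rule ccontr)
    assume "\<not> ?thesis"
    then have "v = 0\<^sub>v n" using v(1) by (intro eq_vecI) auto
    then show False using v(2) by simp
  qed
  then obtain k where k: "k < n" "v$k \<noteq> 0" by blast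
  have Rpos: "R > 0"
  proof -
    have "(cmod (v$k))^2 \<le> R" unfolding R_def
      using k by (intro member_le_sum) auto
    moreover have "(cmod (v$k))^2 > 0" using k by simp
    ultimately show ?thesis by linarith
  qed
  have "cnj q = cnj a * complex_of_real R" using q_eq by simp
  then have "cnj a * complex_of_real R = a * complex_of_real R"
    using cq q_eq by simp
  then have ca: "cnj a = a" using Rpos by simp
  define \<mu> where "\<mu> = Re a"
  have "Im a = 0" using arg_cong[OF ca, of Im] by simp
  then have a_eq: "a = complex_of_real \<mu>" unfolding \<mu>_def by (simp add: complex_eq_iff)
  define w1 where "w1 = vec n (\<lambda>i. Re (v$i))"
  define w2 where "w2 = vec n (\<lambda>i. Im (v$i))"
  have h1: "(\<Sum>j<n. A$$(i,j) * w1$j) = \<mu> * w1$i" if i: "i < n" for i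
  proof -
    have "(\<Sum>j<n. A$$(i,j) * w1$j) = Re (\<Sum>j<n. complex_of_real (A$$(i,j)) * v$j)"
      unfolding w1_def by simp
    also have "\<dots> = \<mu> * w1$i" using Av[OF i] i unfolding a_eq w1_def by simp
    finally show ?thesis .
  qed
  have h2: "(\<Sum>j<n. A$$(i,j) * w2$j) = \<mu> * w2$i" if i: "i < n" for i
  proof -
    have "(\<Sum>j<n. A$$(i,j) * w2$j) = Im (\<Sum>j<n. complex_of_real (A$$(i,j)) * v$j)"
      unfolding w2_def by simp
    also have "\<dots> = \<mu> * w2$i" using Av[OF i] i unfolding a_eq w2_def by simp
    finally show ?thesis .
  qed
  have "Re (v$k) \<noteq> 0 \<or> Im (v$k) \<noteq> 0" using k by (simp add: complex_eq_iff)
  then have "w1 \<noteq> 0\<^sub>v n \<or> w2 \<noteq> 0\<^sub>v n"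
    using k unfolding w1_def w2_def by (auto dest: arg_cong[where f="\<lambda>w. w$k"])
  then show ?thesis
  proof
    assume "w1 \<noteq> 0\<^sub>v n"
    then show ?thesis using eig_from_sums[OF A _ _ h1] unfolding w1_def by auto
  next
    assume "w2 \<noteq> 0\<^sub>v n"
    then show ?thesis using eig_from_sums[OF A _ _ h2] unfolding w2_def by auto
  qed
qed

lemma fin_eig:
  fixes A :: "real mat"
  assumes A: "A \<in> carrier_mat n n"
  shows "finite {x. eigenvalue A x}"
proof -
  have "char_poly A \<noteq> 0" using degree_monic_char_poly[OF A] by auto
  then have "finite {x. poly (char_poly A) x = 0}" by (rule poly_roots_finite)
  then show ?thesis using eigenvalue_root_char_poly[OF A] by simp
qed

lemma signed_Kn_sym: "i < n \<Longrightarrow> j < n \<Longrightarrow> signed_Kn n H $$ (i,j) = signed_Kn n H $$ (j,i)"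
  unfolding signed_Kn_def by (auto simp: insert_commute)

lemma g1_high':
  fixes m r y :: real
  assumes m: "m \<ge> 1" and r: "r \<ge> 0" and y: "y \<ge> m+r+4"
  shows "g1 m r y > 0"
proof -
  have y4: "(4::real)^2 \<le> y^2" using y m r by (intro power_mono) auto
  have eq: "g1 m r y = y^4*(y - (m+r+4)) + (12*m+16*r)*y^2 + 4*m*r*(y^2 - 8)"
    unfolding g1_def by (simp add: algebra_simps power2_eq_square power3_eq_cube power4_eq_xxxx power_numeral_reduce)
  have "y^4*(y - (m+r+4)) \<ge> 0" using y by simp
  moreover have "(12*m+16*r)*y^2 > 0" using m r y4 by (intro mult_pos_pos) auto
  moreover have "4*m*r*(y^2 - 8) \<ge> 0" using m r y4 by (intro mult_nonneg_nonneg) auto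
  ultimately show ?thesis using eq by simp
qed

theorem corollary3p4:
  fixes s t k n :: nat
  assumes "s \<ge> 1" and "t \<ge> 1" and "k = s + t + 4" and "k \<le> n"
  shows "index (signed_Kn n (Q_edges s t)) < index (signed_Kn n (Q1_edges k))"
proof -
  note st = assms(1,2)
  define m where "m = s + t"
  define r where "r = n - k"
  have n1: "n = s+t+4+r" and n2: "n = m+4+r" using assms unfolding m_def r_def by auto
  have m2: "m \<ge> 2" using st m_def by simp
  have Q1: "Q1_edges k = Q_edges m 0" using Q1_eq[of k] assms m_def by simp
  define A where "A = signed_Kn n (Q_edges s t)"
  define A' where "A' = signed_Kn n (Q_edges m 0)"
  have Ac: "A \<in> carrier_mat n n" "A' \<in> carrier_mat n n" unfolding A_def A'_def by (simp_all add: signed_Kn_carrier)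
  define E where "E = {x. eigenvalue A x}"
  define E' where "E' = {x. eigenvalue A' x}"
  have fE: "finite E" "finite E'" unfolding E_def E'_def using fin_eig Ac by auto
  have "\<exists>\<mu>. eigenvalue A \<mu>"
    using sym_eig[OF Ac(1)] n1 unfolding A_def using signed_Kn_sym by auto
  then have nE: "E \<noteq> {}" unfolding E_def by auto
  define \<mu>0 where "\<mu>0 = Max E"
  have mu0: "eigenvalue A \<mu>0" using Max_in[OF fE(1) nE] unfolding \<mu>0_def E_def by simp
  define x0 where "x0 = \<mu>0 + 1"
  define L where "L = real m + real r + 2"
  have L4: "L \<ge> 4" using m2 unfolding L_def by simp
  have gL: "g1 m r L < 0" unfolding L_def using g1_low[of "real m" "real r"] m2 by simp
  obtain y0 where y0: "y0 \<ge> x0" "y0 \<ge> L" "g1 m r y0 < 0"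
  proof (cases "x0 \<ge> L")
    case True
    have mu: "\<mu>0 \<noteq> -1" using True L4 x0_def by auto
    have pq: "pQ x0 s t r = 0" using eigQ[OF n1 mu0[unfolded A_def] mu] x0_def by simp
    have x0r: "x0 \<ge> real r + 4" using True m2 L_def by simp
    have sq: "(real r + 4)^2 \<le> x0^2" using x0r by (intro power_mono) auto
    have "(real r+4)^2 = (real r)^2 + 8*real r + 16" by (simp add: power2_eq_square algebra_simps)
    moreover have "(real r)^2 \<ge> 0" by simp
    ultimately have a1: "x0^2 - 4 > 0" and a2: "x0^2 - 2*real r > 0" using sq by linarith+
    have "8*real s*real t*(x0^2-4)*(x0^2-2*real r) > 0" using st a1 a2 by simp
    then have "x0^2 * g1 (real s + real t) r x0 < 0" using pq pQ_g1[of x0 s t r] by linarith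
    moreover have "x0^2 > 0" using True L4 by simp
    ultimately have "g1 m r x0 < 0" unfolding m_def by (simp add: mult_less_0_iff)
    then show ?thesis using that True by auto
  next
    case False
    then show ?thesis using that gL by auto
  qed
  define N where "N = real m + real r + 4"
  have gN: "\<And>y. y \<ge> N \<Longrightarrow> g1 m r y > 0" unfolding N_def using g1_high' m2 by simp
  have yN: "y0 \<le> N" using gN[of y0] y0(3) by fastforce
  have cont: "continuous_on {y0..N} (\<lambda>y. g1 m r y)" unfolding g1_def by (intro continuous_intros)
  obtain \<rho> where rho: "y0 \<le> \<rho>" "\<rho> \<le> N" "g1 m r \<rho> = 0"
    using IVT'[of "\<lambda>y. g1 m r y" y0 0 N, OF _ _ yN cont] y0(3) gN[of N] by auto
  have rho_gt: "\<rho> > x0" using rho y0 by (cases "\<rho> = y0") auto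
  have rho0: "\<rho> \<noteq> 0" using rho y0 L4 by auto
  have ev': "eigenvalue A' (\<rho> - 1)" unfolding A'_def using eigQ1[OF n2 rho(3) rho0] .
  then have "\<rho> - 1 \<in> E'" unfolding E'_def by simp
  then have "\<rho> - 1 \<le> Max E'" using fE(2) by simp
  moreover have "\<mu>0 < \<rho> - 1" using rho_gt x0_def by simp
  ultimately have "Max E < Max E'" unfolding \<mu>0_def by simp
  then show ?thesis unfolding index_def E_def E'_def A_def A'_def Q1 .
qed

end
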